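(* Let $\gamma\in(1,2]$, $a>0$ and $u\in\mathbb R^3$, and let $$g(\lambda)=\lambda^3-\frac1{4\gamma}\big(4a^4+4a^2+\gamma(|u|^2+2)^2\big)\lambda^2+\frac{a^2}{4\gamma^2}\Big(4a^4-4a^2+\gamma\big[4(|u|^2+1)a^2+(|u|^2+2)^2\big]\Big)\lambda-\frac{a^6(\gamma-1)}{\gamma^3}.$$ Assume $g$ has three positive real roots $0<\lambda_1<\lambda_2<\lambda_3$. Then $$\lambda_1\ge\frac{a^2(\gamma-1)}{\gamma}\min\Big(\frac{a^2}{\gamma(|u|^2+2)^2},\ \frac1{4(a^2+1)},\ \frac1{4\gamma(|u|^2+1)}\Big).$$ *)

theory Defs
  imports "HOL-Analysis.Analysis"
begin

definition gB2 :: "real \<Rightarrow> real \<Rightarrow> real^3 \<Rightarrow> real \<Rightarrow> real" where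
  "gB2 \<gamma> a u x =
     x^3
     - (1 / (4 * \<gamma>)) * (4 * a^4 + 4 * a^2 + \<gamma> * (norm u ^ 2 + 2)^2) * x^2
     + (a^2 / (4 * \<gamma>^2)) * (4 * a^4 - 4 * a^2
          + \<gamma> * (4 * (norm u ^ 2 + 1) * a^2 + (norm u ^ 2 + 2)^2)) * x
     - a^6 * (\<gamma> - 1) / \<gamma>^3"

end

theory Submission
  imports Defs
begin

lemma vieta3:
  fixes B C D x y z :: real
  assumes "x < y" "y < z"
    and "x^3 - B*x^2 + C*x - D = 0" "y^3 - B*y^2 + C*y - D = 0" "z^3 - B*z^2 + C*z - D = 0"
  shows "D = x*y*z" "C = x*y + x*z + y*z"
proof -
  have e1: "(y - x) * (x^2 + x*y + y^2 - B*(x+y) + C) = 0"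
    using assms(3,4) by (simp add: algebra_simps power2_eq_square power3_eq_cube)
  have e2: "(z - x) * (x^2 + x*z + z^2 - B*(x+z) + C) = 0"
    using assms(3,5) by (simp add: algebra_simps power2_eq_square power3_eq_cube)
  have f1: "x^2 + x*y + y^2 - B*(x+y) + C = 0" using e1 assms(1) by simp
  have f2: "x^2 + x*z + z^2 - B*(x+z) + C = 0" using e2 assms(1,2) by simp
  have "(z - y) * (x + y + z - B) = 0" using f1 f2 by (simp add: algebra_simps power2_eq_square)
  hence hB: "B = x + y + z" using assms by simp
  show hC: "C = x*y + x*z + y*z" using f1 hB by (simp add: algebra_simps power2_eq_square)
  show "D = x*y*z" using assms(3) hB hC by (simp add: algebra_simps power2_eq_square power3_eq_cube)
qed

theorem lemmaB2:
  fixes \<gamma> a l1 l2 l3 :: real and u :: "real^3"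
  assumes "1 < \<gamma>" "\<gamma> \<le> 2" "0 < a"
    and "0 < l1" "l1 < l2" "l2 < l3"
    and "gB2 \<gamma> a u l1 = 0" "gB2 \<gamma> a u l2 = 0" "gB2 \<gamma> a u l3 = 0"
  shows "l1 \<ge> a^2 * (\<gamma> - 1) / \<gamma> *
           Min {a^2 / (\<gamma> * (norm u ^ 2 + 2)^2), 1 / (4 * (a^2 + 1)), 1 / (4 * \<gamma> * (norm u ^ 2 + 1))}"
proof -
  define s where "s = norm u ^ 2"
  define A where "A = a^2"
  have s0: "s \<ge> 0" unfolding s_def by simp
  have A0: "A > 0" unfolding A_def using assms(3) by simp
  have g0: "\<gamma> > 0" using assms(1) by simp
  define E where "E = 4 * A^2 - 4 * A + \<gamma> * (4 * (s + 1) * A + (s + 2)^2)"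
  define B where "B = (1 / (4 * \<gamma>)) * (4 * a^4 + 4 * a^2 + \<gamma> * (norm u ^ 2 + 2)^2)"
  define C where "C = (a^2 / (4 * \<gamma>^2)) * (4 * a^4 - 4 * a^2
          + \<gamma> * (4 * (norm u ^ 2 + 1) * a^2 + (norm u ^ 2 + 2)^2))"
  define D where "D = a^6 * (\<gamma> - 1) / \<gamma>^3"
  have gdef: "\<And>x. gB2 \<gamma> a u x = x^3 - B*x^2 + C*x - D"
    unfolding gB2_def B_def C_def D_def by simp
  have V: "D = l1*l2*l3" "C = l1*l2 + l1*l3 + l2*l3"
    using vieta3[of l1 l2 l3 B C D] assms gdef by auto
  have a4: "a^4 = A^2" and a6: "a^6 = A^3" unfolding A_def by (simp_all add: power_mult[symmetric])
  have CE: "C = A / (4*\<gamma>^2) * E" unfolding C_def E_def a4 A_def s_def by simp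
  have DA: "D = A^3 * (\<gamma> - 1) / \<gamma>^3" unfolding D_def a6 by simp
  define M where "M = Min {A / (\<gamma> * (s + 2)^2), 1 / (4 * (A + 1)), 1 / (4 * \<gamma> * (s + 1))}"
  have M1: "M \<le> A / (\<gamma> * (s + 2)^2)" and M2: "M \<le> 1 / (4 * (A + 1))"
    and M3: "M \<le> 1 / (4 * \<gamma> * (s + 1))" unfolding M_def by auto
  have Mpos: "M > 0" unfolding M_def using A0 g0 s0 by (simp add: add_pos_nonneg)
  have p1: "\<gamma> * (s+2)^2 * M \<le> A" using M1 g0 s0 by (simp add: field_simps)
  have p2: "4 * (A+1) * M \<le> 1" using M2 A0 by (simp add: field_simps)
  have p3: "4 * \<gamma> * (s+1) * M \<le> 1" proof -
    have "0 < 4 * \<gamma> * (s+1)" using g0 s0 by simp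
    thus ?thesis using M3 by (simp add: le_divide_eq mult.commute)
  qed
  have t2: "4 * A^2 * M \<le> A"
  proof -
    have "4 * A^2 * M \<le> A * (4 * (A+1) * M)" using A0 Mpos by (simp add: power2_eq_square algebra_simps)
    also have "\<dots> \<le> A" using p2 A0 by (simp add: mult_left_le)
    finally show ?thesis .
  qed
  have t3: "\<gamma> * (4 * (s + 1) * A) * M \<le> A"
    using mult_left_mono[OF p3, of A] A0 by (simp add: algebra_simps)
  have EM: "E * M \<le> 4 * A"
  proof -
    have "E*M = 4*A^2*M - 4*(A*M) + \<gamma>*(4*(s+1)*A)*M + \<gamma>*(s+2)^2*M" by (simp add: E_def algebra_simps)
    also have "\<dots> \<le> 4*A^2*M + \<gamma>*(4*(s+1)*A)*M + \<gamma>*(s+2)^2*M"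
      using A0 Mpos by simp
    also have "\<dots> \<le> A + A + A" by (intro add_mono t2 t3 p1)
    also have "\<dots> \<le> 4 * A" using A0 by simp
    finally show ?thesis .
  qed
  have Epos: "E > 0"
  proof -
    have "\<gamma> * (s+1) \<ge> 1" proof -
      have "\<gamma> * (s+1) \<ge> 1 * 1" using assms(1) s0 by (intro mult_mono) auto
      thus ?thesis by simp
    qed
    hence "\<gamma> * (s+1) * A \<ge> 1 * A" using A0 by (intro mult_right_mono) auto
    hence "\<gamma> * (4*(s+1)*A) \<ge> 4*A" by (simp add: algebra_simps)
    moreover have "\<gamma> * (s+2)^2 > 0" using g0 s0 by simp
    moreover have "A^2 \<ge> 0" by simp
    moreover have "E = 4*A^2 - 4*A + \<gamma> * (4*(s+1)*A) + \<gamma> * (s+2)^2"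
      unfolding E_def by (simp add: algebra_simps)
    ultimately show ?thesis by linarith
  qed
  have Cpos: "C > 0" unfolding CE using A0 g0 Epos by simp
  have lC: "l1 * C \<ge> D"
  proof -
    have "l1 * C - D = l1 * l1 * (l2 + l3)" unfolding V by (simp add: algebra_simps)
    moreover have "l1 * l1 * (l2 + l3) \<ge> 0" using assms(4-6) by simp
    ultimately show ?thesis by simp
  qed
  have "C * (A * (\<gamma> - 1) / \<gamma> * M) = A^2 * (\<gamma> - 1) / (4 * \<gamma>^3) * (E * M)"
    unfolding CE using g0 by (simp add: field_simps power2_eq_square power3_eq_cube)
  also have "\<dots> \<le> A^2 * (\<gamma> - 1) / (4 * \<gamma>^3) * (4 * A)"
    using EM assms(1) g0 by (intro mult_left_mono) auto
  also have "\<dots> = D" unfolding DA using g0 by (simp add: field_simps power2_eq_square power3_eq_cube)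
  finally have "C * (A * (\<gamma> - 1) / \<gamma> * M) \<le> C * l1" using lC by (simp add: mult.commute)
  hence "A * (\<gamma> - 1) / \<gamma> * M \<le> l1" using Cpos mult_le_cancel_left_pos by blast
  thus ?thesis unfolding A_def M_def s_def .
qed

end
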